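(* Let $K_h, M_h, W_h, D_h\in\mathbb{R}^{N_h\times N_h}$, $y_d,f\in\mathbb{R}^{N_h}$, $\alpha>0$, $\delta>0$, $a,b\in\mathbb{R}$, $c_n$ and $\sigma$ be as described in the context, and let $$F(p,\lambda,\mu)=\tfrac12\|K_h^Tp+\lambda-M_hy_d\|_{M_h^{-1}}^2+\tfrac{1}{2\alpha}\|M_hp-\mu\|_{M_h^{-1}}^2+\delta^*_{\mathcal{C}}(\lambda)+\delta^*_{\mathcal{S}}(\mu)+(M_hf,p)-\tfrac12\|y_d\|_{M_h}^2$$ for $p,\lambda,\mu\in\mathbb{R}^{N_h}$, with $\phi(p,\lambda,\mu)=\tfrac12\|K_h^Tp+\lambda-M_hy_d\|_{M_h^{-1}}^2+\tfrac{1}{2\alpha}\|M_hp-\mu\|_{M_h^{-1}}^2-\tfrac12\|y_d\|_{M_h}^2$. Consider the following algorithm (FE-dABCD). Input: $(p^1,\lambda^1,\mu^1)=(\tilde p^0,\tilde\lambda^0,\tilde\mu^0)\in\mathbb{R}^{N_h}\times\mathrm{dom}(\delta^*_{\mathcal{C}})\times\mathrm{dom}(\delta^*_{\mathcal{S}})$, a sequence of nonnegative numbers $\{\epsilon_k\}$ with $\sum_{k=1}^\infty k\epsilon_k<\infty$, $t_1=1$. For $k=1,2,\dots$: Step 1: choose error vectors $\delta_p^k,\delta_\lambda^k,\delta_\mu^k\in\mathbb{R}^{N_h}$ with $\max\{\|\delta_p^k\|,\|\delta_\lambda^k\|,\|\delta_\mu^k\|\}\le\epsilon_k$, and compute \begin{align*}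 \tilde p^k&=\arg\min_p\big\{(M_hf,p)+\phi(p,\lambda^k,\mu^k)-\langle\delta_p^k,p\rangle\big\},\\ \tilde\lambda^k&=\arg\min_\lambda\big\{\delta^*_{\mathcal{C}}(\lambda)+\tfrac12\|\lambda-M_hy_d+K_h^T\tilde p^k\|_{M_h^{-1}}^2+\tfrac12\|\lambda-\lambda^k\|_{\sigma I-M_h^{-1}}^2-\langle\delta_\lambda^k,\lambda\rangle\big\},\\ \tilde\mu^k&=\arg\min_\mu\big\{\delta^*_{\mathcal{S}}(\mu)+\tfrac{1}{2\alpha}\|\mu-M_h\tilde p^k\|_{M_h^{-1}}^2+\tfrac{1}{2\alpha}\|\mu-\mu^k\|_{c_nW_h^{-1}-M_h^{-1}}^2-\langle\delta_\mu^k,\mu\rangle\big\}; \end{align*} Step 2: set $t_{k+1}=\frac{1+\sqrt{1+4t_k^2}}{2}$, $\beta_k=\frac{t_k-1}{t_{k+1}}$, and $p^{k+1}=\tilde p^k+\beta_k(\tilde p^k-\tilde p^{k-1})$, $\lambda^{k+1}=\tilde\lambda^k+\beta_k(\tilde\lambda^k-\tilde\lambda^{k-1})$, $\mu^{k+1}=\tilde\mu^k+\beta_k(\tilde\mu^k-\tilde\mu^{k-1})$. Let $\tilde z^k=(\tilde p^k,\tilde\lambda^k,\tilde\mu^k)$ be the generated sequence and let $z^*$ be a minimizer of $F$. Then there is a constant $c_0$ such that $$F(\tilde z^k)-F(z^* )\le\frac{2\|\tilde z^0-z^*\|_{\mathscr{S}}^2+c_0}{(k+1)^2}\qquad\forall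 k\ge1,$$ where $\mathscr{S}=\mathrm{Diag}(\mathcal{D}_1,\mathcal{D}_2+\mathcal{Q}_{22})$ with $\mathcal{D}_1=0$, $\mathcal{D}_2=\mathrm{Diag}\big(\sigma I-M_h^{-1},\ \tfrac1\alpha(c_nW_h^{-1}-M_h^{-1})\big)$, $\mathcal{Q}_{22}=\mathrm{Diag}\big(M_h^{-1},\tfrac1\alpha M_h^{-1}\big)$.
   Context: Setting: $\Omega\subset\mathbb{R}^n$ ($n=2,3$) is an open bounded convex polygonal/polyhedral domain (or approximated by $\Omega_h$), with a regular, quasi-uniform family of triangulations; $\phi_1,\dots,\phi_{N_h}$ are the nodal basis functions of continuous piecewise linear finite elements vanishing on the boundary. $K_h=(a(\phi_i,\phi_j))_{i,j}$ is the stiffness matrix of the bilinear form $a(y,v)=\int_\Omega(\sum_{i,j}a_{ij}y_{x_i}v_{x_j}+c_0yv)dx$ of a uniformly elliptic operator (symmetric positive definite), $M_h=(\int_{\Omega_h}\phi_i\phi_j dx)_{i,j}$ is the mass matrix, $W_h=\mathrm{diag}(\int_{\Omega_h}\phi_i dx)_{i}$ is the lumped mass matrix, and $D_h=\sum_{j=1}^n\big(\int_{\Omega_h}\partial_{x_j}\phi_i\,\partial_{x_j}\phi_l\,dx\big)_{i,l}$. $y_d,f\in\mathbb{R}^{N_h}$ are nodal values of given data. $\mathcal{C}=\{z\in\mathbb{R}^{N_h}: z^TD_hz\le\delta\}$, $\mathcal{S}=\{z\in\mathbb{R}^{N_h}: a\le z\le b \text{ componentwise}\}$. For a closed convex set $B$,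 $\delta^*_B(y)=\sup_{x\in B}(y,x)$ is its support function (the conjugate of the indicator function of $B$). $\|x\|_G^2=x^TGx$ and $(\cdot,\cdot)$, $\langle\cdot,\cdot\rangle$ denote the Euclidean inner product. $c_n=4$ if $n=2$ and $c_n=5$ if $n=3$ (so that $\|z\|_{M_h}^2\le\|z\|_{W_h}^2\le c_n\|z\|_{M_h}^2$), and $\sigma=c_n\omega_m$ where $\omega_m$ is the inverse of the smallest diagonal entry of $W_h$, so that $\sigma I-M_h^{-1}\succeq0$ and $c_nW_h^{-1}-M_h^{-1}\succeq0$. *)

theory Defs
  imports "HOL-Analysis.Analysis"
begin

definition gnorm2 :: "real^'n^'n \<Rightarrow> real^'n \<Rightarrow> real" where
  "gnorm2 G x = x \<bullet> (G *v x)"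

definition spd :: "real^'n^'n \<Rightarrow> bool" where
  "spd G \<longleftrightarrow> transpose G = G \<and> (\<forall>x. x \<noteq> 0 \<longrightarrow> 0 < x \<bullet> (G *v x))"

definition psd :: "real^'n^'n \<Rightarrow> bool" where
  "psd G \<longleftrightarrow> transpose G = G \<and> (\<forall>x. 0 \<le> x \<bullet> (G *v x))"

definition is_diag :: "real^'n^'n \<Rightarrow> bool" where
  "is_diag G \<longleftrightarrow> (\<forall>i j. i \<noteq> j \<longrightarrow> G $ i $ j = 0)"

text \<open>Support function of a set B (the conjugate of its indicator function);
  it is only used for the compact nonempty sets C and S below, where it is finite.\<close>
definition support_fun :: "(real^'n) set \<Rightarrow> real^'n \<Rightarrow> real" where
  "support_fun B y = (SUP x\<in>B. y \<bullet> x)"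

definition C_set :: "real^'n^'n \<Rightarrow> real \<Rightarrow> (real^'n) set" where
  "C_set D delta = {z. z \<bullet> (D *v z) \<le> delta}"

definition S_box :: "real \<Rightarrow> real \<Rightarrow> (real^'n) set" where
  "S_box a b = {z. \<forall>i. a \<le> z $ i \<and> z $ i \<le> b}"

definition phi_fun :: "real^'n^'n \<Rightarrow> real^'n^'n \<Rightarrow> real^'n \<Rightarrow> real
    \<Rightarrow> real^'n \<Rightarrow> real^'n \<Rightarrow> real^'n \<Rightarrow> real" where
  "phi_fun K M yd \<alpha> p l m =
     1/2 * gnorm2 (matrix_inv M) (transpose K *v p + l - M *v yd)
   + 1/(2*\<alpha>) * gnorm2 (matrix_inv M) (M *v p - m)
   - 1/2 * gnorm2 M yd"

definition F_fun :: "real^'n^'n \<Rightarrow> real^'n^'n \<Rightarrow> real^'n^'n \<Rightarrow> real^'n \<Rightarrow> real^'n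
    \<Rightarrow> real \<Rightarrow> real \<Rightarrow> real \<Rightarrow> real \<Rightarrow> real^'n \<Rightarrow> real^'n \<Rightarrow> real^'n \<Rightarrow> real" where
  "F_fun K M D yd f \<alpha> delta a b p l m =
     1/2 * gnorm2 (matrix_inv M) (transpose K *v p + l - M *v yd)
   + 1/(2*\<alpha>) * gnorm2 (matrix_inv M) (M *v p - m)
   + support_fun (C_set D delta) l + support_fun (S_box a b) m
   + (M *v f) \<bullet> p - 1/2 * gnorm2 M yd"

end

theory Submission imports Defs
begin

lemma sym_inner: fixes A :: "real^'n^'n" assumes "transpose A = A"
  shows "(A *v x) \<bullet> y = x \<bullet> (A *v y)"
  by (metis assms dot_lmul_matrix transpose_matrix_vector)

lemma gnorm2_add: fixes G :: "real^'n^'n" assumes "transpose G = G"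
  shows "gnorm2 G (x + y) = gnorm2 G x + 2 * (y \<bullet> (G *v x)) + gnorm2 G y"
proof -
  have "x \<bullet> (G *v y) = y \<bullet> (G *v x)"
    by (metis assms sym_inner inner_commute)
  then show ?thesis unfolding gnorm2_def
    by (simp add: matrix_vector_right_distrib inner_add_left inner_add_right)
qed

lemma gnorm2_scale: "gnorm2 G (c *\<^sub>R x) = c^2 * gnorm2 G x"
  unfolding gnorm2_def by (simp add: matrix_vector_mult_scaleR power2_eq_square)

lemma gnorm2_neg: "gnorm2 G (- x) = gnorm2 G x"
  proof -
  have "G *v (- x) = - (G *v x)" using matrix_vector_mult_diff_distrib[of G 0 x] by simp
  then show ?thesis unfolding gnorm2_def by simp
qed

lemma gnorm2_mat_add: "gnorm2 (A + B) x = gnorm2 A x + gnorm2 B x"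
  unfolding gnorm2_def by (simp add: matrix_vector_mult_add_rdistrib inner_add_right)

lemma gnorm2_mat_diff: "gnorm2 (A - B) x = gnorm2 A x - gnorm2 B x"
  unfolding gnorm2_def by (simp add: matrix_vector_mult_diff_rdistrib inner_diff_right)

lemma gnorm2_mat_scale: "gnorm2 (c *\<^sub>R A) x = c * gnorm2 A x"
  unfolding gnorm2_def by (simp add: scaleR_matrix_vector_assoc[symmetric])

lemma gnorm2_id: "gnorm2 (mat 1) x = norm x ^ 2"
  unfolding gnorm2_def by (simp add: power2_norm_eq_inner)

lemma gnorm2_zero_mat: "gnorm2 0 x = 0"
  unfolding gnorm2_def by simp

lemma invertible_inv: fixes A :: "real^'n^'n" assumes "invertible A"
  shows "A ** matrix_inv A = mat 1" "matrix_inv A ** A = mat 1"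
proof -
  have "\<exists>A'. A ** A' = mat 1 \<and> A' ** A = mat 1" using assms unfolding invertible_def by blast
  then have "A ** matrix_inv A = mat 1 \<and> matrix_inv A ** A = mat 1"
    unfolding matrix_inv_def by (rule someI_ex)
  then show "A ** matrix_inv A = mat 1" "matrix_inv A ** A = mat 1" by auto
qed

lemma pos_invertible: fixes A :: "real^'n^'n"
  assumes "\<forall>x. x \<noteq> 0 \<longrightarrow> 0 < x \<bullet> (A *v x)"
  shows "invertible A"
proof -
  have "\<forall>x. A *v x = 0 \<longrightarrow> x = 0" using assms by force
  then have "\<exists>B. B ** A = mat 1" using matrix_left_invertible_ker by blast
  then show ?thesis using invertible_left_inverse by blast
qed

lemma inv_sym: fixes A :: "real^'n^'n" assumes "invertible A" "transpose A = A"
  shows "transpose (matrix_inv A) = matrix_inv A"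
proof -
  have "transpose (matrix_inv A) ** A = mat 1"
    by (metis assms invertible_inv(1) matrix_transpose_mul transpose_mat)
  then have "transpose (matrix_inv A) = transpose (matrix_inv A) ** (A ** matrix_inv A)"
    using assms(1) invertible_inv(1)[of A] by (simp add: matrix_mul_rid)
  also have "\<dots> = matrix_inv A"
    by (metis \<open>transpose (matrix_inv A) ** A = mat 1\<close> matrix_mul_assoc matrix_mul_lid)
  finally show ?thesis .
qed

lemma spd_lower: fixes G :: "real^'n^'n" assumes "spd G"
  shows "\<exists>c>0. \<forall>x. c * norm x ^ 2 \<le> gnorm2 G x"
proof -
  let ?f = "\<lambda>x. x \<bullet> (G *v x)"
  have cont: "continuous_on (sphere 0 1) ?f"
    by (intro continuous_intros linear_continuous_on) auto
  have "sphere (0::real^'n) 1 \<noteq> {}" by simp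
  then obtain x0 where x0: "x0 \<in> sphere 0 1" "\<forall>y\<in>sphere 0 1. ?f x0 \<le> ?f y"
    using continuous_attains_inf[OF compact_sphere _ cont] by blast
  have "x0 \<noteq> 0" using x0 by auto
  then have pos: "0 < ?f x0" using assms unfolding spd_def by auto
  show ?thesis
  proof (intro exI[of _ "?f x0"] conjI allI pos)
    fix x :: "real^'n"
    show "?f x0 * norm x ^ 2 \<le> gnorm2 G x"
    proof (cases "x = 0")
      case True then show ?thesis by (simp add: gnorm2_def)
    next
      case False
      let ?y = "(1 / norm x) *\<^sub>R x"
      have "?y \<in> sphere 0 1" using False by simp
      then have "?f x0 \<le> ?f ?y" using x0 by blast
      also have "?f ?y = gnorm2 G x / norm x ^ 2"
        using gnorm2_scale[of G "1/norm x" x] unfolding gnorm2_def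
        by (simp add: power2_eq_square divide_simps)
      finally show ?thesis using False by (simp add: divide_simps)
    qed
  qed
qed


lemma support_sublin:
  fixes B :: "(real^'n) set"
  assumes ne: "B \<noteq> {}" and bd: "bounded B" and u: "0 \<le> u" and v: "0 \<le> v"
  shows "support_fun B (u *\<^sub>R y1 + v *\<^sub>R y2) \<le> u * support_fun B y1 + v * support_fun B y2"
proof -
  obtain R where R: "\<forall>x\<in>B. norm x \<le> R" using bd unfolding bounded_iff by blast
  have bdd: "bdd_above ((\<lambda>x. y \<bullet> x) ` B)" for y
  proof (rule bdd_aboveI2)
    fix x assume "x \<in> B"
    have "y \<bullet> x \<le> norm y * norm x" by (rule norm_cauchy_schwarz)
    also have "\<dots> \<le> norm y * R" using R \<open>x \<in> B\<close> by (simp add: mult_left_mono)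
    finally show "y \<bullet> x \<le> norm y * R" .
  qed
  show ?thesis unfolding support_fun_def
  proof (rule cSUP_least[OF ne])
    fix x assume x: "x \<in> B"
    have "(u *\<^sub>R y1 + v *\<^sub>R y2) \<bullet> x = u * (y1 \<bullet> x) + v * (y2 \<bullet> x)"
      by (simp add: inner_add_left)
    also have "\<dots> \<le> u * (SUP x\<in>B. y1 \<bullet> x) + v * (SUP x\<in>B. y2 \<bullet> x)"
      by (intro add_mono mult_left_mono cSUP_upper[OF x bdd] u v)
    finally show "(u *\<^sub>R y1 + v *\<^sub>R y2) \<bullet> x \<le> u * (SUP x\<in>B. y1 \<bullet> x) + v * (SUP x\<in>B. y2 \<bullet> x)" .
  qed
qed

lemma C_set_ok: assumes "spd D" "0 < delta"
  shows "C_set D delta \<noteq> {}" "bounded (C_set D delta)"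
proof -
  have "0 \<in> C_set D delta" using assms unfolding C_set_def by simp
  then show "C_set D delta \<noteq> {}" by blast
  obtain c where c: "c > 0" "\<forall>x. c * norm x ^ 2 \<le> gnorm2 D x" using spd_lower[OF assms(1)] by blast
  show "bounded (C_set D delta)" unfolding bounded_iff
  proof (intro exI ballI)
    fix z assume "z \<in> C_set D delta"
    then have "z \<bullet> (D *v z) \<le> delta" unfolding C_set_def by simp
    moreover have "c * norm z ^ 2 \<le> z \<bullet> (D *v z)" using c(2) unfolding gnorm2_def by blast
    ultimately have "c * norm z ^ 2 \<le> delta" by linarith
    then have "norm z ^ 2 \<le> delta / c" using c by (simp add: field_simps)
    moreover have "norm z \<le> 1 + norm z ^ 2"
    proof -
      have "0 \<le> (norm z - 1)^2" by simp
      then have "0 \<le> norm z * norm z - 2 * norm z + 1" by (simp add: power2_eq_square algebra_simps)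
      then show ?thesis using norm_ge_zero[of z] unfolding power2_eq_square by linarith
    qed
    ultimately show "norm z \<le> 1 + delta / c" by linarith
  qed
qed

lemma S_box_ok: assumes "a \<le> b"
  shows "(S_box a b :: (real^'n) set) \<noteq> {}" "bounded (S_box a b :: (real^'n) set)"
proof -
  have "(\<chi> i. a) \<in> S_box a b" using assms unfolding S_box_def by simp
  then show "S_box a b \<noteq> {}" by blast
  show "bounded (S_box a b :: (real^'n) set)" unfolding bounded_iff
  proof (intro exI[of _ "(\<Sum>i\<in>(UNIV::'n set). \<bar>a\<bar> + \<bar>b\<bar>)"] ballI)
    fix z :: "real^'n" assume z: "z \<in> S_box a b"
    have "norm z \<le> (\<Sum>i\<in>UNIV. \<bar>z$i\<bar>)" by (rule norm_le_l1_cart)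
    also have "\<dots> \<le> (\<Sum>i\<in>(UNIV::'n set). \<bar>a\<bar> + \<bar>b\<bar>)"
    proof (intro sum_mono)
      fix i
      have "a \<le> z$i" "z$i \<le> b" using z unfolding S_box_def by auto
      then show "\<bar>z$i\<bar> \<le> \<bar>a\<bar> + \<bar>b\<bar>" by linarith
    qed
    finally show "norm z \<le> (\<Sum>i\<in>(UNIV::'n set). \<bar>a\<bar> + \<bar>b\<bar>)" .
  qed
qed


lemma small_t: fixes A B :: real
  assumes "\<forall>t. 0 < t \<and> t \<le> 1 \<longrightarrow> 0 \<le> A + t * B" shows "0 \<le> A"
proof (rule ccontr)
  assume "\<not> 0 \<le> A"
  then have A: "A < 0" by simp
  define t where "t = min 1 (- A / (2 * (\<bar>B\<bar> + 1)))"
  have "0 < - A / (2 * (\<bar>B\<bar> + 1))" using A by (intro divide_pos_pos) auto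
  then have tpos: "0 < t" unfolding t_def by simp
  have t1: "t \<le> 1" unfolding t_def by simp
  have t2: "t \<le> - A / (2 * (\<bar>B\<bar> + 1))" unfolding t_def by simp
  have "t * B \<le> t * \<bar>B\<bar>" using tpos by (simp add: mult_left_mono)
  also have "\<dots> \<le> (- A / (2 * (\<bar>B\<bar> + 1))) * \<bar>B\<bar>" by (intro mult_right_mono t2) simp
  also have "\<dots> \<le> - A / 2"
  proof -
    have "(- A / (2 * (\<bar>B\<bar> + 1))) * \<bar>B\<bar> = (- A / 2) * (\<bar>B\<bar> / (\<bar>B\<bar> + 1))" by (simp add: field_simps)
    also have "\<dots> \<le> (- A / 2) * 1" using A by (intro mult_left_mono) auto
    finally show ?thesis by simp
  qed
  finally have "A + t * B < 0" using A by linarith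
  then show False using assms tpos t1 by force
qed

lemma quad_zero: fixes A B :: real
  assumes "\<forall>t. 0 \<le> t * A + t^2 * B" shows "A = 0"
proof (rule ccontr)
  assume A: "A \<noteq> 0"
  show False
  proof (cases "B \<le> 0")
    case True
    have "0 \<le> (-A) * A + (-A)^2 * B" using assms by blast
    moreover have "(-A)^2 * B \<le> 0" using True by (simp add: mult_nonneg_nonpos)
    moreover have "(-A) * A < 0" using A by (cases "A > 0") (auto simp: mult_pos_pos mult_neg_neg)
    ultimately show False by linarith
  next
    case False
    have "0 \<le> (-A/(2*B)) * A + (-A/(2*B))^2 * B" using assms by blast
    also have "\<dots> = - (A^2 / (4*B))" using False by (simp add: field_simps power2_eq_square)
    moreover have "0 < A^2 / (4*B)" using A False by (intro divide_pos_pos) auto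
    ultimately show False by linarith
  qed
qed

lemma three_point:
  fixes \<theta> :: "real^'n \<Rightarrow> real" and G1 G2 :: "real^'n^'n"
  assumes conv: "\<forall>x q t. 0 \<le> t \<and> t \<le> 1 \<longrightarrow> \<theta> ((1-t) *\<^sub>R x + t *\<^sub>R q) \<le> (1-t) * \<theta> x + t * \<theta> q"
    and s1: "transpose G1 = G1" and s2: "transpose G2 = G2"
    and mn: "\<forall>q. \<theta> x + c * gnorm2 G1 (x - a) + c * gnorm2 G2 (x - b) - d \<bullet> x
               \<le> \<theta> q + c * gnorm2 G1 (q - a) + c * gnorm2 G2 (q - b) - d \<bullet> q"
  shows "\<theta> x + c * gnorm2 G1 (x - a) + c * gnorm2 G2 (x - b) - d \<bullet> x + c * gnorm2 (G1 + G2) (q - x)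
         \<le> \<theta> q + c * gnorm2 G1 (q - a) + c * gnorm2 G2 (q - b) - d \<bullet> q"
proof -
  define y where "y = q - x"
  define L where "L = 2 * c * (y \<bullet> (G1 *v (x - a))) + 2 * c * (y \<bullet> (G2 *v (x - b))) - d \<bullet> y"
  define R where "R = c * gnorm2 G1 y + c * gnorm2 G2 y"
  define Q where "Q = (\<lambda>z. c * gnorm2 G1 (z - a) + c * gnorm2 G2 (z - b) - d \<bullet> z)"
  have Qexp: "Q (x + t *\<^sub>R y) = Q x + t * L + t^2 * R" for t
  proof -
    have e1: "x + t *\<^sub>R y - a = (x - a) + t *\<^sub>R y" by (simp add: algebra_simps)
    have e2: "x + t *\<^sub>R y - b = (x - b) + t *\<^sub>R y" by (simp add: algebra_simps)
    show ?thesis unfolding Q_def e1 e2 gnorm2_add[OF s1] gnorm2_add[OF s2] gnorm2_scale L_def R_def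
      by (simp add: algebra_simps inner_add_right)
  qed
  have key: "0 \<le> \<theta> q - \<theta> x + L + t * R" if t: "0 < t" "t \<le> 1" for t
  proof -
    have pt: "x + t *\<^sub>R y = (1-t) *\<^sub>R x + t *\<^sub>R q" unfolding y_def by (simp add: algebra_simps)
    have "\<theta> x + Q x \<le> \<theta> (x + t *\<^sub>R y) + Q (x + t *\<^sub>R y)" using mn[rule_format, of "x + t *\<^sub>R y"] unfolding Q_def by linarith
    also have "\<dots> \<le> (1-t) * \<theta> x + t * \<theta> q + Q x + t * L + t^2 * R"
    proof -
      have "\<theta> ((1-t) *\<^sub>R x + t *\<^sub>R q) \<le> (1-t) * \<theta> x + t * \<theta> q" using conv t by auto
      then have "\<theta> (x + t *\<^sub>R y) \<le> (1-t) * \<theta> x + t * \<theta> q" using pt by simp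
      then show ?thesis using Qexp[of t] by linarith
    qed
    finally have "0 \<le> t * (\<theta> q - \<theta> x + L + t * R)" by (simp add: algebra_simps power2_eq_square)
    then show ?thesis using t by (simp add: zero_le_mult_iff)
  qed
  have "0 \<le> \<theta> q - \<theta> x + L" using small_t[of "\<theta> q - \<theta> x + L" R] key by (simp add: algebra_simps)
  moreover have "Q q = Q x + L + R" using Qexp[of 1] unfolding y_def by simp
  moreover have "R = c * gnorm2 (G1 + G2) (q - x)" unfolding R_def y_def gnorm2_mat_add by (simp add: algebra_simps)
  ultimately show ?thesis unfolding Q_def by (simp add: algebra_simps)
qed


lemma rec_bounded:
  fixes E c d :: "nat \<Rightarrow> real"
  assumes E0: "\<forall>k. 0 \<le> E k" and c0: "\<forall>k. 0 \<le> c k" and d0: "\<forall>k. 0 \<le> d k"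
    and sc: "summable c" and sd: "summable d"
    and rec: "\<forall>k\<ge>1. E k \<le> E (k-1) + c k * (sqrt (E (k-1)) + sqrt (E k)) + d k"
  shows "\<exists>B. \<forall>k. E k \<le> B"
proof -
  have tele: "E N \<le> E 0 + (\<Sum>k\<in>{1..N}. c k * (sqrt (E (k-1)) + sqrt (E k)) + d k)" for N
  proof (induction N)
    case 0 then show ?case by simp
  next
    case (Suc N)
    have "E (Suc N) \<le> E N + c (Suc N) * (sqrt (E N) + sqrt (E (Suc N))) + d (Suc N)"
      using rec[rule_format, of "Suc N"] by simp
    then show ?case using Suc by (simp add: sum.cl_ivl_Suc)
  qed
  define S1 where "S1 = suminf c"
  define S2 where "S2 = suminf d"
  have "E N \<le> 2 * (E 0 + S2) + 4 * S1^2" for N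
  proof -
    define m where "m = Max (E ` {0..N})"
    have "m \<in> E ` {0..N}" unfolding m_def by (intro Max_in) auto
    then obtain j where j: "j \<in> {0..N}" "E j = m" by auto
    have le_m: "E i \<le> m" if "i \<le> N" for i unfolding m_def using that by (intro Max_ge) auto
    define x where "x = sqrt (E j)"
    have x0: "0 \<le> x" unfolding x_def using E0 by simp
    have sq_le: "sqrt (E i) \<le> x" if "i \<le> j" for i
      unfolding x_def using le_m[of i] j that by (intro real_sqrt_le_mono) auto
    have "E j \<le> E 0 + (\<Sum>k\<in>{1..j}. c k * (sqrt (E (k-1)) + sqrt (E k)) + d k)" by (rule tele)
    also have "\<dots> \<le> E 0 + (\<Sum>k\<in>{1..j}. c k * (2 * x) + d k)"
    proof -
      have "c k * (sqrt (E (k-1)) + sqrt (E k)) \<le> c k * (2 * x)" if "k \<in> {1..j}" for k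
      proof -
        have kj: "k-1 \<le> j" "k \<le> j" using that by auto
        have "sqrt (E (k-1)) + sqrt (E k) \<le> 2 * x" using sq_le[OF kj(1)] sq_le[OF kj(2)] by linarith
        then show ?thesis using c0 by (intro mult_left_mono) auto
      qed
      then show ?thesis by (intro add_left_mono sum_mono) auto
    qed
    also have "\<dots> = E 0 + 2 * x * (\<Sum>k\<in>{1..j}. c k) + (\<Sum>k\<in>{1..j}. d k)"
      by (simp add: sum.distrib sum_distrib_left sum_distrib_right algebra_simps)
    also have "\<dots> \<le> E 0 + 2 * x * S1 + S2"
    proof -
      have "(\<Sum>k\<in>{1..j}. c k) \<le> S1" unfolding S1_def using sc c0 by (intro sum_le_suminf) auto
      moreover have "(\<Sum>k\<in>{1..j}. d k) \<le> S2" unfolding S2_def using sd d0 by (intro sum_le_suminf) auto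
      ultimately show ?thesis using x0 by (smt (verit) mult_left_mono)
    qed
    finally have ej: "E j \<le> E 0 + 2 * x * S1 + S2" .
    have "x^2 = E j" unfolding x_def by (rule real_sqrt_pow2[OF E0[rule_format]])
    moreover have "2 * x * S1 \<le> x^2 / 2 + 2 * S1^2"
    proof -
      have "0 \<le> (x - 2 * S1)^2" by simp
      then show ?thesis by (simp add: power2_eq_square algebra_simps)
    qed
    ultimately have "2 * x * S1 \<le> E j / 2 + 2 * S1^2" by simp
    then have "E j \<le> 2 * E 0 + 2 * S2 + 4 * S1^2" using ej by linarith
    then have "E j \<le> 2 * (E 0 + S2) + 4 * S1^2" by simp
    then show ?thesis using le_m[of N] j by simp
  qed
  then show ?thesis by blast
qed

lemma t_facts:
  fixes t :: "nat \<Rightarrow> real"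
  assumes t1: "t 1 = 1" and tr: "\<forall>k\<ge>1. t (Suc k) = (1 + sqrt (1 + 4 * (t k)\<^sup>2)) / 2"
  shows "\<forall>k\<ge>1. 1 \<le> t k \<and> t k \<le> real k \<and> (real k + 1) / 2 \<le> t k"
    and "\<forall>k\<ge>1. (t (Suc k))^2 - t (Suc k) = (t k)^2"
proof -
  show "\<forall>k\<ge>1. 1 \<le> t k \<and> t k \<le> real k \<and> (real k + 1) / 2 \<le> t k"
  proof (intro allI impI)
    fix k :: nat assume "1 \<le> k"
    then show "1 \<le> t k \<and> t k \<le> real k \<and> (real k + 1) / 2 \<le> t k"
    proof (induction k rule: dec_induct)
      case base then show ?case using t1 by simp
    next
      case (step k)
      have e: "t (Suc k) = (1 + sqrt (1 + 4 * (t k)\<^sup>2)) / 2" using tr step by auto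
      have "sqrt (1 + 4 * (t k)\<^sup>2) \<le> 1 + 2 * t k"
        using step by (intro real_le_lsqrt) (auto simp: power2_eq_square algebra_simps)
      moreover have "2 * t k \<le> sqrt (1 + 4 * (t k)\<^sup>2)"
        using step by (intro real_le_rsqrt) (auto simp: power2_eq_square algebra_simps)
      ultimately show ?case using e step by auto
    qed
  qed
  show "\<forall>k\<ge>1. (t (Suc k))^2 - t (Suc k) = (t k)^2"
  proof (intro allI impI)
    fix k :: nat assume "1 \<le> k"
    define s where "s = sqrt (1 + 4 * (t k)\<^sup>2)"
    have s2: "s^2 = 1 + 4 * (t k)^2" unfolding s_def by (simp add: add_nonneg_nonneg)
    have "t (Suc k) = (1 + s) / 2" using tr \<open>1 \<le> k\<close> unfolding s_def by auto
    then have "(t (Suc k))^2 - t (Suc k) = ((1+s)/2)^2 - (1+s)/2" by (simp only:)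
    also have "\<dots> = (s^2 - 1)/4" by (simp add: power2_eq_square field_simps)
    also have "\<dots> = (t k)^2" using s2 by simp
    finally show "(t (Suc k))^2 - t (Suc k) = (t k)^2" .
  qed
qed


lemma transpose_add': "transpose (A + B) = transpose A + (transpose B :: 'a::semiring_1^'n^'m)"
  by (simp add: transpose_def vec_eq_iff)

lemma transpose_diff': "transpose (A - B) = transpose A - (transpose B :: 'a::ring_1^'n^'m)"
  by (simp add: transpose_def vec_eq_iff)

lemma gnorm2_diff: fixes G :: "real^'n^'n" assumes "transpose G = G"
  shows "gnorm2 G (u - v) = gnorm2 G u - 2 * (v \<bullet> (G *v u)) + gnorm2 G v"
  using gnorm2_add[OF assms, of u "- v"] gnorm2_neg[of G v] by simp

lemma quad_comb: fixes G :: "real^'n^'n" assumes s: "transpose G = G"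
  shows "\<tau> * ((\<tau> - 1) * (gnorm2 G (w1 - x) - gnorm2 G (w1 - y)) + (gnorm2 G (w2 - x) - gnorm2 G (w2 - y)))
    = gnorm2 G (\<tau> *\<^sub>R x - ((\<tau> - 1) *\<^sub>R w1 + w2)) - gnorm2 G (\<tau> *\<^sub>R y - ((\<tau> - 1) *\<^sub>R w1 + w2))"
proof -
  define W where "W = (\<tau> - 1) *\<^sub>R w1 + w2"
  have sy: "u \<bullet> (G *v v) = v \<bullet> (G *v u)" for u v by (metis s sym_inner inner_commute)
  have r1: "gnorm2 G (\<tau> *\<^sub>R z - W) = \<tau>^2 * gnorm2 G z - 2 * \<tau> * ((\<tau> - 1) * (w1 \<bullet> (G *v z)) + w2 \<bullet> (G *v z)) + gnorm2 G W" for z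
    unfolding gnorm2_diff[OF s] gnorm2_scale W_def
    by (simp add: matrix_vector_mult_scaleR inner_add_left algebra_simps)
  have r2: "gnorm2 G (w - z) = gnorm2 G w - 2 * (w \<bullet> (G *v z)) + gnorm2 G z" for w z
    unfolding gnorm2_diff[OF s] using sy by simp
  show ?thesis unfolding W_def[symmetric] r1 unfolding r2 by (simp add: algebra_simps power2_eq_square)
qed

locale prob =
  fixes K M D W :: "real^'n^'n" and yd f :: "real^'n" and \<alpha> delta a b cn \<sigma> :: real
  assumes K_spd: "spd K" and M_spd: "spd M" and D_spd: "spd D"
    and psd1: "psd (\<sigma> *\<^sub>R mat 1 - matrix_inv M)"
    and psd2: "psd (cn *\<^sub>R matrix_inv W - matrix_inv M)"
    and alpha_pos: "\<alpha> > 0" and delta_pos: "delta > 0" and ab: "a \<le> b"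
begin

definition "Mi = matrix_inv M"
definition "c = 1 / (2 * \<alpha>)"
definition "P = cn *\<^sub>R matrix_inv W"
definition "E1 = \<sigma> *\<^sub>R mat 1 - Mi"
definition "E2 = P - Mi"
definition "h p l m = (M *v f) \<bullet> p + phi_fun K M yd \<alpha> p l m"
definition "th1 = support_fun (C_set D delta)"
definition "th2 = support_fun (S_box a b)"
definition "FF p l m = F_fun K M D yd f \<alpha> delta a b p l m"
definition "Gp p l m = M *v f + K *v (Mi *v (K *v p + l - M *v yd)) + (2 * c) *\<^sub>R (M *v p - m)"
definition "Q = K ** Mi ** K + (2 * c) *\<^sub>R M"

lemma c_pos: "c > 0" unfolding c_def using alpha_pos by simp

lemma FF_eq: "FF p l m = h p l m + th1 l + th2 m"
  unfolding FF_def F_fun_def h_def phi_fun_def th1_def th2_def by simp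

lemma KT: "transpose K = K" using K_spd unfolding spd_def by simp
lemma MT: "transpose M = M" using M_spd unfolding spd_def by simp
lemma M_inv: "invertible M" using M_spd unfolding spd_def by (intro pos_invertible) auto
lemma MMi: "M *v (Mi *v v) = v"
  unfolding Mi_def using invertible_inv(1)[OF M_inv] by (simp add: matrix_vector_mul_assoc)
lemma MiM: "Mi *v (M *v v) = v"
  unfolding Mi_def using invertible_inv(2)[OF M_inv] by (simp add: matrix_vector_mul_assoc)
lemma MiT: "transpose Mi = Mi" unfolding Mi_def using inv_sym[OF M_inv MT] .
lemma gMi: "gnorm2 Mi v = gnorm2 M (Mi *v v)"
proof -
  have "gnorm2 Mi v = (M *v (Mi *v v)) \<bullet> (Mi *v v)" unfolding gnorm2_def MMi by simp
  also have "\<dots> = gnorm2 M (Mi *v v)" unfolding gnorm2_def by (simp add: sym_inner[OF MT])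
  finally show ?thesis .
qed
lemma gMi_nonneg: "0 \<le> gnorm2 Mi v"
  unfolding gMi using M_spd unfolding spd_def gnorm2_def
  by (metis inner_zero_left le_less)
lemma Mi_spd: "spd Mi"
  unfolding spd_def
proof (intro conjI allI impI MiT)
  fix x :: "real^'n" assume "x \<noteq> 0"
  then have "Mi *v x \<noteq> 0" using MMi[of x] by auto
  then show "0 < x \<bullet> (Mi *v x)" using gMi[of x] M_spd unfolding spd_def gnorm2_def by auto
qed
lemma E1T: "transpose E1 = E1" using psd1 unfolding psd_def E1_def Mi_def by simp
lemma E2T: "transpose E2 = E2" using psd2 unfolding psd_def E2_def Mi_def P_def by simp
lemma E1_nonneg: "0 \<le> gnorm2 E1 v" using psd1 unfolding psd_def E1_def Mi_def gnorm2_def by simp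
lemma E2_nonneg: "0 \<le> gnorm2 E2 v" using psd2 unfolding psd_def E2_def Mi_def P_def gnorm2_def by simp
lemma PT: "transpose P = P"
proof -
  have "P = E2 + Mi" unfolding E2_def by simp
  then show ?thesis using E2T MiT transpose_add' by metis
qed
lemma Mi_E1: "gnorm2 Mi v + gnorm2 E1 v = \<sigma> * norm v ^ 2"
  unfolding E1_def gnorm2_mat_diff gnorm2_mat_scale gnorm2_id by simp
lemma Mi_E2: "gnorm2 Mi v + gnorm2 E2 v = gnorm2 P v"
  unfolding E2_def gnorm2_mat_diff by simp

lemma h_expand:
  "h (p + x) (l + u) (m + v) = h p l m + x \<bullet> Gp p l m + u \<bullet> (Mi *v (K *v p + l - M *v yd))
     - 2 * c * (v \<bullet> (Mi *v (M *v p - m)))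
     + 1/2 * gnorm2 Mi (K *v x + u) + c * gnorm2 Mi (M *v x - v)"
proof -
  define r where "r = K *v p + l - M *v yd"
  define s where "s = M *v p - m"
  have r': "K *v (p + x) + (l + u) - M *v yd = r + (K *v x + u)"
    unfolding r_def by (simp add: matrix_vector_right_distrib algebra_simps)
  have s': "M *v (p + x) - (m + v) = s + (M *v x - v)"
    unfolding s_def by (simp add: matrix_vector_right_distrib algebra_simps)
  have i1: "(K *v x) \<bullet> (Mi *v r) = x \<bullet> (K *v (Mi *v r))" by (rule sym_inner[OF KT])
  have i2: "(M *v x) \<bullet> (Mi *v s) = x \<bullet> s" using sym_inner[OF MT, of x "Mi *v s"] MMi by simp
  have e1: "gnorm2 Mi (r + (K *v x + u)) = gnorm2 Mi r + 2 * (x \<bullet> (K *v (Mi *v r)) + u \<bullet> (Mi *v r)) + gnorm2 Mi (K *v x + u)"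
    using gnorm2_add[OF MiT, of r "K *v x + u"] i1 by (simp add: inner_add_left)
  have e2: "gnorm2 Mi (s + (M *v x - v)) = gnorm2 Mi s + 2 * (x \<bullet> s - v \<bullet> (Mi *v s)) + gnorm2 Mi (M *v x - v)"
    using gnorm2_add[OF MiT, of s "M *v x - v"] i2 by (simp add: inner_diff_left)
  have hp: "h p l m = (M *v f) \<bullet> p + 1/2 * gnorm2 Mi r + c * gnorm2 Mi s - 1/2 * gnorm2 M yd"
    unfolding h_def phi_fun_def KT r_def s_def Mi_def c_def by simp
  have gp: "x \<bullet> Gp p l m = (M *v f) \<bullet> x + x \<bullet> (K *v (Mi *v r)) + 2 * c * (x \<bullet> s)"
    unfolding Gp_def r_def[symmetric] s_def[symmetric] by (simp add: inner_add_right inner_commute)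
  have "h (p + x) (l + u) (m + v) = (M *v f) \<bullet> p + (M *v f) \<bullet> x + 1/2 * gnorm2 Mi (r + (K *v x + u))
      + c * gnorm2 Mi (s + (M *v x - v)) - 1/2 * gnorm2 M yd"
    unfolding h_def phi_fun_def KT r' s' Mi_def c_def by (simp add: inner_add_right)
  also have "\<dots> = h p l m + x \<bullet> Gp p l m + u \<bullet> (Mi *v r) - 2 * c * (v \<bullet> (Mi *v s))
     + 1/2 * gnorm2 Mi (K *v x + u) + c * gnorm2 Mi (M *v x - v)"
    unfolding e1 e2 hp gp by (simp add: algebra_simps)
  finally show ?thesis unfolding r_def s_def .
qed


lemma Gp_shift: "Gp (p + y) (l + u) (m + v) = Gp p l m + Q *v y + K *v (Mi *v u) - (2 * c) *\<^sub>R v"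
proof -
  have "Q *v y = K *v (Mi *v (K *v y)) + (2 * c) *\<^sub>R (M *v y)"
    unfolding Q_def by (simp add: matrix_vector_mult_add_rdistrib matrix_vector_mul_assoc matrix_mul_assoc scaleR_matrix_vector_assoc)
  then show ?thesis unfolding Gp_def
    by (simp add: matrix_vector_right_distrib algebra_simps)
qed

lemma h_expand0: "h (p + x) l m = h p l m + x \<bullet> Gp p l m + 1/2 * gnorm2 Mi (K *v x) + c * gnorm2 Mi (M *v x)"
  using h_expand[of p x l 0 m 0] by simp

lemma first_order:
  assumes "\<forall>q. h pt lk mk - dp \<bullet> pt \<le> h q lk mk - dp \<bullet> q"
  shows "Gp pt lk mk = dp"
proof -
  let ?G = "Gp pt lk mk"
  have "x \<bullet> ?G = dp \<bullet> x" for x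
  proof -
    let ?B = "1/2 * gnorm2 Mi (K *v x) + c * gnorm2 Mi (M *v x)"
    have "0 \<le> t * (x \<bullet> ?G - dp \<bullet> x) + t^2 * ?B" for t
    proof -
      have "h pt lk mk - dp \<bullet> pt \<le> h (pt + t *\<^sub>R x) lk mk - dp \<bullet> (pt + t *\<^sub>R x)"
        using assms by blast
      also have "h (pt + t *\<^sub>R x) lk mk = h pt lk mk + t * (x \<bullet> ?G) + t^2 * ?B"
        unfolding h_expand0 by (simp add: matrix_vector_mult_scaleR gnorm2_scale algebra_simps)
      finally show ?thesis by (simp add: inner_add_right algebra_simps)
    qed
    then have "x \<bullet> ?G - dp \<bullet> x = 0" by (intro quad_zero) blast
    then show ?thesis by simp
  qed
  from this[of "?G - dp"] have "(?G - dp) \<bullet> (?G - dp) = 0" by (simp add: inner_diff_left inner_commute)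
  then show ?thesis by simp
qed

lemma pi_min: assumes "Gp pp l m = 0" shows "h pp l m \<le> h p l m"
proof -
  have "h p l m = h (pp + (p - pp)) l m" by simp
  also have "\<dots> = h pp l m + 1/2 * gnorm2 Mi (K *v (p - pp)) + c * gnorm2 Mi (M *v (p - pp))"
    unfolding h_expand0 assms by simp
  moreover have "0 \<le> c * gnorm2 Mi (M *v (p - pp))" using gMi_nonneg c_pos by simp
  moreover have "0 \<le> 1/2 * gnorm2 Mi (K *v (p - pp))" using gMi_nonneg by simp
  ultimately show ?thesis by linarith
qed

lemma cpart: assumes "Gp pt lk mk = dp"
  shows "h pt l m \<le> h p l m - dp \<bullet> (p - pt) + 1/2 * gnorm2 Mi (l - lk) + c * gnorm2 Mi (m - mk)"
proof -
  define x where "x = p - pt"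
  define u where "u = l - lk"
  define v where "v = m - mk"
  have A: "h p l m = h pt lk mk + x \<bullet> dp + u \<bullet> (Mi *v (K *v pt + lk - M *v yd))
     - 2 * c * (v \<bullet> (Mi *v (M *v pt - mk))) + 1/2 * gnorm2 Mi (K *v x + u) + c * gnorm2 Mi (M *v x - v)"
    using h_expand[of pt x lk u mk v] assms unfolding x_def u_def v_def by simp
  have B: "h pt l m = h pt lk mk + u \<bullet> (Mi *v (K *v pt + lk - M *v yd))
     - 2 * c * (v \<bullet> (Mi *v (M *v pt - mk))) + 1/2 * gnorm2 Mi u + c * gnorm2 Mi (- v)"
    using h_expand[of pt 0 lk u mk v] unfolding u_def v_def by simp
  have C: "0 \<le> 1/2 * gnorm2 Mi (K *v x + u) + c * gnorm2 Mi (M *v x - v)"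
    using gMi_nonneg c_pos by (simp add: add_nonneg_nonneg)
  have "x \<bullet> dp = dp \<bullet> (p - pt)" unfolding x_def by (simp add: inner_commute)
  then show ?thesis using A B C unfolding gnorm2_neg u_def[symmetric] v_def[symmetric] by linarith
qed


lemma Q_apply: "Q *v y = K *v (Mi *v (K *v y)) + (2 * c) *\<^sub>R (M *v y)"
  unfolding Q_def by (simp add: matrix_vector_mult_add_rdistrib matrix_vector_mul_assoc matrix_mul_assoc scaleR_matrix_vector_assoc)

lemma Q_quad: "y \<bullet> (Q *v y) = gnorm2 Mi (K *v y) + 2 * c * gnorm2 M y"
  unfolding Q_apply gnorm2_def by (simp add: inner_add_right sym_inner[OF KT, symmetric])

lemma Q_lower: "\<exists>cq>0. \<forall>y. cq * norm y ^ 2 \<le> y \<bullet> (Q *v y)"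
proof -
  obtain cM where cM: "cM > 0" "\<forall>x. cM * norm x ^ 2 \<le> gnorm2 M x" using spd_lower[OF M_spd] by blast
  show ?thesis
  proof (intro exI[of _ "2 * c * cM"] conjI allI)
    show "0 < 2 * c * cM" using c_pos cM by simp
    fix y
    have "2 * c * cM * norm y ^ 2 \<le> 2 * c * gnorm2 M y" using cM c_pos
      by (simp add: mult.assoc mult_left_mono)
    then show "2 * c * cM * norm y ^ 2 \<le> y \<bullet> (Q *v y)" unfolding Q_quad using gMi_nonneg[of "K *v y"] by linarith
  qed
qed

lemma Q_inv: "invertible Q"
proof -
  obtain cq where cq: "cq > 0" "\<forall>y. cq * norm y ^ 2 \<le> y \<bullet> (Q *v y)" using Q_lower by blast
  show ?thesis
  proof (rule pos_invertible, intro allI impI)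
    fix x :: "real^'n" assume "x \<noteq> 0"
    then have "0 < cq * norm x ^ 2" using cq by simp
    then show "0 < x \<bullet> (Q *v x)" using cq by (meson less_le_trans)
  qed
qed

lemma Q_solve: "Q *v (matrix_inv Q *v g) = g"
  using invertible_inv(1)[OF Q_inv] by (simp add: matrix_vector_mul_assoc)

lemma Q_bound: "\<exists>cq>0. \<forall>y. cq * norm y \<le> norm (Q *v y)"
proof -
  obtain cq where cq: "cq > 0" "\<forall>y. cq * norm y ^ 2 \<le> y \<bullet> (Q *v y)" using Q_lower by blast
  show ?thesis
  proof (intro exI[of _ cq] conjI allI cq(1))
    fix y :: "real^'n"
    show "cq * norm y \<le> norm (Q *v y)"
    proof (cases "y = 0")
      case True then show ?thesis by simp
    next
      case False
      have "cq * norm y * norm y \<le> norm y * norm (Q *v y)"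
        using cq(2)[rule_format, of y] norm_cauchy_schwarz[of y "Q *v y"] by (simp add: power2_eq_square)
      then show ?thesis using False by (simp add: mult.commute)
    qed
  qed
qed

lemma th1_conv: "\<forall>x q t. 0 \<le> t \<and> t \<le> 1 \<longrightarrow> th1 ((1-t) *\<^sub>R x + t *\<^sub>R q) \<le> (1-t) * th1 x + t * th1 q"
  unfolding th1_def using support_sublin[OF C_set_ok[OF D_spd delta_pos]] by simp

lemma th2_conv: "\<forall>x q t. 0 \<le> t \<and> t \<le> 1 \<longrightarrow> th2 ((1-t) *\<^sub>R x + t *\<^sub>R q) \<le> (1-t) * th2 x + t * th2 q"
proof (intro allI impI)
  fix x q and t :: real assume "0 \<le> t \<and> t \<le> 1"
  then show "th2 ((1-t) *\<^sub>R x + t *\<^sub>R q) \<le> (1-t) * th2 x + t * th2 q"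
    unfolding th2_def by (intro support_sublin S_box_ok ab) auto
qed

lemma step_ineq:
  assumes fo: "Gp pt lk mk = dp"
    and sl: "\<forall>q. support_fun (C_set D delta) lt
          + 1/2 * gnorm2 (matrix_inv M) (lt - M *v yd + transpose K *v pt)
          + 1/2 * gnorm2 (\<sigma> *\<^sub>R mat 1 - matrix_inv M) (lt - lk) - dl \<bullet> lt
        \<le> support_fun (C_set D delta) q
          + 1/2 * gnorm2 (matrix_inv M) (q - M *v yd + transpose K *v pt)
          + 1/2 * gnorm2 (\<sigma> *\<^sub>R mat 1 - matrix_inv M) (q - lk) - dl \<bullet> q"
    and sm: "\<forall>q. support_fun (S_box a b) mt
          + 1/(2*\<alpha>) * gnorm2 (matrix_inv M) (mt - M *v pt)
          + 1/(2*\<alpha>) * gnorm2 (cn *\<^sub>R matrix_inv W - matrix_inv M) (mt - mk) - dm \<bullet> mt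
        \<le> support_fun (S_box a b) q
          + 1/(2*\<alpha>) * gnorm2 (matrix_inv M) (q - M *v pt)
          + 1/(2*\<alpha>) * gnorm2 (cn *\<^sub>R matrix_inv W - matrix_inv M) (q - mk) - dm \<bullet> q"
  shows "FF pt lt mt \<le> FF p l m + 1/2 * (\<sigma> * norm (l - lk)^2) - 1/2 * (\<sigma> * norm (l - lt)^2)
          + c * gnorm2 P (m - mk) - c * gnorm2 P (m - mt) - dp \<bullet> (p - pt) - dl \<bullet> (l - lt) - dm \<bullet> (m - mt)"
proof -
  define av where "av = M *v yd - K *v pt"
  have veq: "q - M *v yd + K *v pt = q - av" for q unfolding av_def by (simp add: algebra_simps)
  have sl': "\<forall>q. th1 lt + 1/2 * gnorm2 Mi (lt - av) + 1/2 * gnorm2 E1 (lt - lk) - dl \<bullet> lt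
        \<le> th1 q + 1/2 * gnorm2 Mi (q - av) + 1/2 * gnorm2 E1 (q - lk) - dl \<bullet> q"
    using sl unfolding KT veq th1_def[symmetric] Mi_def[symmetric] E1_def[symmetric] .
  have sm': "\<forall>q. th2 mt + c * gnorm2 Mi (mt - M *v pt) + c * gnorm2 E2 (mt - mk) - dm \<bullet> mt
        \<le> th2 q + c * gnorm2 Mi (q - M *v pt) + c * gnorm2 E2 (q - mk) - dm \<bullet> q"
    using sm unfolding th2_def[symmetric] Mi_def[symmetric] c_def[symmetric] E2_def P_def .
  have L: "th1 lt + 1/2 * gnorm2 Mi (lt - av) + 1/2 * gnorm2 E1 (lt - lk) - dl \<bullet> lt + 1/2 * gnorm2 (Mi + E1) (l - lt)
        \<le> th1 l + 1/2 * gnorm2 Mi (l - av) + 1/2 * gnorm2 E1 (l - lk) - dl \<bullet> l"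
    by (rule three_point[OF th1_conv MiT E1T sl'])
  have Mm: "th2 mt + c * gnorm2 Mi (mt - M *v pt) + c * gnorm2 E2 (mt - mk) - dm \<bullet> mt + c * gnorm2 (Mi + E2) (m - mt)
        \<le> th2 m + c * gnorm2 Mi (m - M *v pt) + c * gnorm2 E2 (m - mk) - dm \<bullet> m"
    by (rule three_point[OF th2_conv MiT E2T sm'])
  have L2: "gnorm2 (Mi + E1) (l - lt) = \<sigma> * norm (l - lt)^2" unfolding gnorm2_mat_add Mi_E1 ..
  have M2: "gnorm2 (Mi + E2) (m - mt) = gnorm2 P (m - mt)" unfolding gnorm2_mat_add Mi_E2 ..
  have Cp: "h pt l m \<le> h p l m - dp \<bullet> (p - pt) + 1/2 * gnorm2 Mi (l - lk) + c * gnorm2 Mi (m - mk)"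
    by (rule cpart[OF fo])
  have hform: "h pt l' m' = (M *v f) \<bullet> pt + 1/2 * gnorm2 Mi (l' - av) + c * gnorm2 Mi (m' - M *v pt) - 1/2 * gnorm2 M yd" for l' m'
  proof -
    have a1: "K *v pt + l' - M *v yd = l' - av" unfolding av_def by (simp add: algebra_simps)
    have a2: "gnorm2 Mi (M *v pt - m') = gnorm2 Mi (m' - M *v pt)"
      using gnorm2_neg[of Mi "m' - M *v pt"] by (simp add: minus_diff_eq)
    have "h pt l' m' = (M *v f) \<bullet> pt + 1/2 * gnorm2 Mi (K *v pt + l' - M *v yd) + c * gnorm2 Mi (M *v pt - m') - 1/2 * gnorm2 M yd"
      unfolding h_def phi_fun_def KT Mi_def c_def by simp
    then show ?thesis unfolding a1 a2 .
  qed
  have e1: "1/2 * gnorm2 Mi (l - lk) + 1/2 * gnorm2 E1 (l - lk) = 1/2 * (\<sigma> * norm (l - lk)^2)"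
    using Mi_E1[of "l - lk"] by simp
  have e2: "c * gnorm2 Mi (m - mk) + c * gnorm2 E2 (m - mk) = c * gnorm2 P (m - mk)"
    using Mi_E2[of "m - mk"] by (simp add: distrib_left[symmetric])
  have n1: "0 \<le> 1/2 * gnorm2 E1 (lt - lk)" using E1_nonneg by simp
  have n2: "0 \<le> c * gnorm2 E2 (mt - mk)" using E2_nonneg c_pos by simp
  have d1: "dl \<bullet> (l - lt) = dl \<bullet> l - dl \<bullet> lt" "dm \<bullet> (m - mt) = dm \<bullet> m - dm \<bullet> mt" by (simp_all add: inner_diff_right)
  have F1: "FF pt lt mt = h pt lt mt + th1 lt + th2 mt" "FF p l m = h p l m + th1 l + th2 m" by (simp_all add: FF_eq)
  show ?thesis using L Mm Cp hform[of lt mt] hform[of l m] e1 e2 n1 n2 d1 F1 unfolding L2 M2 by linarith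
qed


lemma comb:
  assumes fo: "Gp pt lk mk = dp"
    and sl: "\<forall>q. support_fun (C_set D delta) lt
          + 1/2 * gnorm2 (matrix_inv M) (lt - M *v yd + transpose K *v pt)
          + 1/2 * gnorm2 (\<sigma> *\<^sub>R mat 1 - matrix_inv M) (lt - lk) - dl \<bullet> lt
        \<le> support_fun (C_set D delta) q
          + 1/2 * gnorm2 (matrix_inv M) (q - M *v yd + transpose K *v pt)
          + 1/2 * gnorm2 (\<sigma> *\<^sub>R mat 1 - matrix_inv M) (q - lk) - dl \<bullet> q"
    and sm: "\<forall>q. support_fun (S_box a b) mt
          + 1/(2*\<alpha>) * gnorm2 (matrix_inv M) (mt - M *v pt)
          + 1/(2*\<alpha>) * gnorm2 (cn *\<^sub>R matrix_inv W - matrix_inv M) (mt - mk) - dm \<bullet> mt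
        \<le> support_fun (S_box a b) q
          + 1/(2*\<alpha>) * gnorm2 (matrix_inv M) (q - M *v pt)
          + 1/(2*\<alpha>) * gnorm2 (cn *\<^sub>R matrix_inv W - matrix_inv M) (q - mk) - dm \<bullet> q"
    and tau: "1 \<le> \<tau>"
  shows "\<tau>^2 * FF pt lt mt \<le> \<tau> * (\<tau> - 1) * FF p1 l1 m1 + \<tau> * FF p2 l2 m2
   + 1/2 * (\<sigma> * norm (\<tau> *\<^sub>R lk - ((\<tau> - 1) *\<^sub>R l1 + l2))^2) - 1/2 * (\<sigma> * norm (\<tau> *\<^sub>R lt - ((\<tau> - 1) *\<^sub>R l1 + l2))^2)
   + c * gnorm2 P (\<tau> *\<^sub>R mk - ((\<tau> - 1) *\<^sub>R m1 + m2)) - c * gnorm2 P (\<tau> *\<^sub>R mt - ((\<tau> - 1) *\<^sub>R m1 + m2))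
   - \<tau> * (dp \<bullet> (matrix_inv Q *v (- (\<tau> *\<^sub>R dp - K *v (Mi *v (\<tau> *\<^sub>R lk - ((\<tau> - 1) *\<^sub>R l1 + l2)))
          + (2 * c) *\<^sub>R (\<tau> *\<^sub>R mk - ((\<tau> - 1) *\<^sub>R m1 + m2))))))
   + \<tau> * (dl \<bullet> (\<tau> *\<^sub>R lt - ((\<tau> - 1) *\<^sub>R l1 + l2))) + \<tau> * (dm \<bullet> (\<tau> *\<^sub>R mt - ((\<tau> - 1) *\<^sub>R m1 + m2)))"
proof -
  define g1 where "g1 = - (dp + K *v (Mi *v (l1 - lk)) - (2 * c) *\<^sub>R (m1 - mk))"
  define g2 where "g2 = - (dp + K *v (Mi *v (l2 - lk)) - (2 * c) *\<^sub>R (m2 - mk))"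
  define y1 where "y1 = matrix_inv Q *v g1"
  define y2 where "y2 = matrix_inv Q *v g2"
  have X: "FF pt lt mt \<le> FF pp l m + 1/2 * (\<sigma> * norm (l - lk)^2) - 1/2 * (\<sigma> * norm (l - lt)^2)
          + c * gnorm2 P (m - mk) - c * gnorm2 P (m - mt) - dp \<bullet> y - dl \<bullet> (l - lt) - dm \<bullet> (m - mt)"
    if y: "y = matrix_inv Q *v (- (dp + K *v (Mi *v (l - lk)) - (2 * c) *\<^sub>R (m - mk)))" for pp l m y
  proof -
    have "Gp (pt + y) (lk + (l - lk)) (mk + (m - mk)) = 0"
      unfolding Gp_shift fo y Q_solve by simp
    then have "Gp (pt + y) l m = 0" by simp
    then have "FF (pt + y) l m \<le> FF pp l m" unfolding FF_eq using pi_min by simp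
    moreover have "FF pt lt mt \<le> FF (pt + y) l m + 1/2 * (\<sigma> * norm (l - lk)^2) - 1/2 * (\<sigma> * norm (l - lt)^2)
          + c * gnorm2 P (m - mk) - c * gnorm2 P (m - mt) - dp \<bullet> (pt + y - pt) - dl \<bullet> (l - lt) - dm \<bullet> (m - mt)"
      by (rule step_ineq[OF fo sl sm])
    ultimately show ?thesis by simp
  qed
  define X1 where "X1 = FF p1 l1 m1 + 1/2 * (\<sigma> * norm (l1 - lk)^2) - 1/2 * (\<sigma> * norm (l1 - lt)^2)
          + c * gnorm2 P (m1 - mk) - c * gnorm2 P (m1 - mt) - dp \<bullet> y1 - dl \<bullet> (l1 - lt) - dm \<bullet> (m1 - mt)"
  define X2 where "X2 = FF p2 l2 m2 + 1/2 * (\<sigma> * norm (l2 - lk)^2) - 1/2 * (\<sigma> * norm (l2 - lt)^2)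
          + c * gnorm2 P (m2 - mk) - c * gnorm2 P (m2 - mt) - dp \<bullet> y2 - dl \<bullet> (l2 - lt) - dm \<bullet> (m2 - mt)"
  have x1: "FF pt lt mt \<le> X1" unfolding X1_def by (rule X) (simp add: y1_def g1_def)
  have x2: "FF pt lt mt \<le> X2" unfolding X2_def by (rule X) (simp add: y2_def g2_def)
  have "\<tau> * (\<tau> - 1) * FF pt lt mt \<le> \<tau> * (\<tau> - 1) * X1" using x1 tau by (intro mult_left_mono) auto
  moreover have "\<tau> * FF pt lt mt \<le> \<tau> * X2" using x2 tau by (intro mult_left_mono) auto
  moreover have "\<tau>^2 * FF pt lt mt = \<tau> * (\<tau> - 1) * FF pt lt mt + \<tau> * FF pt lt mt" by (simp add: power2_eq_square algebra_simps)
  ultimately have main: "\<tau>^2 * FF pt lt mt \<le> \<tau> * (\<tau> - 1) * X1 + \<tau> * X2" by linarith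
  define A where "A = \<tau> * ((\<tau> - 1) * (norm (l1 - lk)^2 - norm (l1 - lt)^2) + (norm (l2 - lk)^2 - norm (l2 - lt)^2))"
  define B where "B = \<tau> * ((\<tau> - 1) * (gnorm2 P (m1 - mk) - gnorm2 P (m1 - mt)) + (gnorm2 P (m2 - mk) - gnorm2 P (m2 - mt)))"
  define C where "C = (\<tau> - 1) * (dp \<bullet> y1) + dp \<bullet> y2"
  define Dl where "Dl = (\<tau> - 1) * (dl \<bullet> (l1 - lt)) + dl \<bullet> (l2 - lt)"
  define Dm where "Dm = (\<tau> - 1) * (dm \<bullet> (m1 - mt)) + dm \<bullet> (m2 - mt)"
  have split: "\<tau> * (\<tau> - 1) * X1 + \<tau> * X2 = \<tau> * (\<tau> - 1) * FF p1 l1 m1 + \<tau> * FF p2 l2 m2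
      + 1/2 * \<sigma> * A + c * B - \<tau> * C - \<tau> * Dl - \<tau> * Dm"
    unfolding X1_def X2_def A_def B_def C_def Dl_def Dm_def by (simp add: field_simps)
  have QA: "A = norm (\<tau> *\<^sub>R lk - ((\<tau> - 1) *\<^sub>R l1 + l2))^2 - norm (\<tau> *\<^sub>R lt - ((\<tau> - 1) *\<^sub>R l1 + l2))^2"
    using quad_comb[of "mat 1" \<tau> l1 lk lt l2] unfolding A_def gnorm2_id by simp
  have QB: "B = gnorm2 P (\<tau> *\<^sub>R mk - ((\<tau> - 1) *\<^sub>R m1 + m2)) - gnorm2 P (\<tau> *\<^sub>R mt - ((\<tau> - 1) *\<^sub>R m1 + m2))"
    using quad_comb[OF PT, of \<tau> m1 mk mt m2] unfolding B_def by simp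
  have QC: "C = dp \<bullet> (matrix_inv Q *v (- (\<tau> *\<^sub>R dp - K *v (Mi *v (\<tau> *\<^sub>R lk - ((\<tau> - 1) *\<^sub>R l1 + l2)))
          + (2 * c) *\<^sub>R (\<tau> *\<^sub>R mk - ((\<tau> - 1) *\<^sub>R m1 + m2)))))"
  proof -
    have "(\<tau> - 1) *\<^sub>R g1 + g2 = - (\<tau> *\<^sub>R dp - K *v (Mi *v (\<tau> *\<^sub>R lk - ((\<tau> - 1) *\<^sub>R l1 + l2)))
          + (2 * c) *\<^sub>R (\<tau> *\<^sub>R mk - ((\<tau> - 1) *\<^sub>R m1 + m2)))"
      unfolding g1_def g2_def
      by (simp add: matrix_vector_mult_diff_distrib matrix_vector_right_distrib matrix_vector_mult_scaleR algebra_simps)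
    moreover have "C = dp \<bullet> (matrix_inv Q *v ((\<tau> - 1) *\<^sub>R g1 + g2))"
      unfolding C_def y1_def y2_def by (simp add: matrix_vector_right_distrib matrix_vector_mult_scaleR inner_add_right)
    ultimately show ?thesis by simp
  qed
  have QD: "Dl = - (dl \<bullet> (\<tau> *\<^sub>R lt - ((\<tau> - 1) *\<^sub>R l1 + l2)))" "Dm = - (dm \<bullet> (\<tau> *\<^sub>R mt - ((\<tau> - 1) *\<^sub>R m1 + m2)))"
    unfolding Dl_def Dm_def by (simp_all add: inner_diff_right inner_add_right algebra_simps)
  show ?thesis using main unfolding split QA QB QC QD by (simp add: algebra_simps)
qed

end

theorem theorem7:
  fixes K M W D :: "real^'n^'n"
    and yd f :: "real^'n"
    and \<alpha> delta a b cn \<sigma> :: real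
    and \<epsilon> t :: "nat \<Rightarrow> real"
    and p l m pt lt mt dp dl dm :: "nat \<Rightarrow> real^'n"
    and ps ls ms :: "real^'n"
  assumes K_spd: "spd K"
    and M_spd: "spd M"
    and D_spd: "spd D"
    and W_diag: "is_diag W" and W_pos: "\<forall>i. 0 < W $ i $ i"
    and cn: "cn = 4 \<or> cn = 5"
    and norm_equiv: "\<forall>z. gnorm2 M z \<le> gnorm2 W z \<and> gnorm2 W z \<le> cn * gnorm2 M z"
    and sigma_def: "\<sigma> = cn * (1 / Min (range (\<lambda>i. W $ i $ i)))"
    and psd1: "psd (\<sigma> *\<^sub>R mat 1 - matrix_inv M)"
    and psd2: "psd (cn *\<^sub>R matrix_inv W - matrix_inv M)"
    and alpha_pos: "\<alpha> > 0" and delta_pos: "delta > 0" and ab: "a \<le> b"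
    and eps_nonneg: "\<forall>k. 0 \<le> \<epsilon> k"
    and eps_sum: "summable (\<lambda>k. real k * \<epsilon> k)"
    and init: "p 1 = pt 0" "l 1 = lt 0" "m 1 = mt 0"
    and t1: "t 1 = 1"
    and t_rec: "\<forall>k\<ge>1. t (Suc k) = (1 + sqrt (1 + 4 * (t k)\<^sup>2)) / 2"
    and err: "\<forall>k\<ge>1. norm (dp k) \<le> \<epsilon> k \<and> norm (dl k) \<le> \<epsilon> k \<and> norm (dm k) \<le> \<epsilon> k"
    and step_p: "\<forall>k\<ge>1. \<forall>q.
        (M *v f) \<bullet> pt k + phi_fun K M yd \<alpha> (pt k) (l k) (m k) - dp k \<bullet> pt k
        \<le> (M *v f) \<bullet> q + phi_fun K M yd \<alpha> q (l k) (m k) - dp k \<bullet> q"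
    and step_l: "\<forall>k\<ge>1. \<forall>q.
        support_fun (C_set D delta) (lt k)
          + 1/2 * gnorm2 (matrix_inv M) (lt k - M *v yd + transpose K *v pt k)
          + 1/2 * gnorm2 (\<sigma> *\<^sub>R mat 1 - matrix_inv M) (lt k - l k) - dl k \<bullet> lt k
        \<le> support_fun (C_set D delta) q
          + 1/2 * gnorm2 (matrix_inv M) (q - M *v yd + transpose K *v pt k)
          + 1/2 * gnorm2 (\<sigma> *\<^sub>R mat 1 - matrix_inv M) (q - l k) - dl k \<bullet> q"
    and step_m: "\<forall>k\<ge>1. \<forall>q.
        support_fun (S_box a b) (mt k)
          + 1/(2*\<alpha>) * gnorm2 (matrix_inv M) (mt k - M *v pt k)
          + 1/(2*\<alpha>) * gnorm2 (cn *\<^sub>R matrix_inv W - matrix_inv M) (mt k - m k) - dm k \<bullet> mt k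
        \<le> support_fun (S_box a b) q
          + 1/(2*\<alpha>) * gnorm2 (matrix_inv M) (q - M *v pt k)
          + 1/(2*\<alpha>) * gnorm2 (cn *\<^sub>R matrix_inv W - matrix_inv M) (q - m k) - dm k \<bullet> q"
    and extrap: "\<forall>k\<ge>1.
        p (Suc k) = pt k + ((t k - 1) / t (Suc k)) *\<^sub>R (pt k - pt (k - 1)) \<and>
        l (Suc k) = lt k + ((t k - 1) / t (Suc k)) *\<^sub>R (lt k - lt (k - 1)) \<and>
        m (Suc k) = mt k + ((t k - 1) / t (Suc k)) *\<^sub>R (mt k - mt (k - 1))"
    and zstar: "\<forall>q r s. F_fun K M D yd f \<alpha> delta a b ps ls ms
                        \<le> F_fun K M D yd f \<alpha> delta a b q r s"
  shows "\<exists>c0. \<forall>k\<ge>1.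
     F_fun K M D yd f \<alpha> delta a b (pt k) (lt k) (mt k) - F_fun K M D yd f \<alpha> delta a b ps ls ms
     \<le> (2 * (gnorm2 (0::real^'n^'n) (pt 0 - ps)
              + gnorm2 ((\<sigma> *\<^sub>R mat 1 - matrix_inv M) + matrix_inv M) (lt 0 - ls)
              + gnorm2 ((1/\<alpha>) *\<^sub>R (cn *\<^sub>R matrix_inv W - matrix_inv M) + (1/\<alpha>) *\<^sub>R matrix_inv M) (mt 0 - ms))
         + c0) / (real k + 1)\<^sup>2"
proof -
  interpret pr: prob K M D W yd f \<alpha> delta a b cn \<sigma>
    using K_spd M_spd D_spd psd1 psd2 alpha_pos delta_pos ab by unfold_locales auto
  have tf1: "\<forall>k\<ge>1. 1 \<le> t k \<and> t k \<le> real k \<and> (real k + 1) / 2 \<le> t k"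
    and tf2: "\<forall>k\<ge>1. (t (Suc k))^2 - t (Suc k) = (t k)^2" using t_facts[OF t1 t_rec] by auto
  define Fs where "Fs = pr.FF ps ls ms"
  define Fk where "Fk k = pr.FF (pt k) (lt k) (mt k)" for k
  define tt where "tt k = (if k = 0 then 1 else t k)" for k
  define ul where "ul k = tt k *\<^sub>R lt k - ((tt k - 1) *\<^sub>R lt (k - 1) + ls)" for k
  define um where "um k = tt k *\<^sub>R mt k - ((tt k - 1) *\<^sub>R mt (k - 1) + ms)" for k
  define H where "H k = 1/2 * (\<sigma> * norm (ul k)^2) + pr.c * gnorm2 pr.P (um k)" for k
  define E where "E k = (if k = 0 then 0 else (t k)^2 * (Fk k - Fs)) + H k" for k
  have Fmin: "Fs \<le> Fk k" for k unfolding Fs_def Fk_def pr.FF_def using zstar by blast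
  obtain cMi where cMi: "cMi > 0" "\<forall>x. cMi * norm x ^ 2 \<le> gnorm2 pr.Mi x"
    using spd_lower[OF pr.Mi_spd] by blast
  define \<kappa> where "\<kappa> = min (1/2 * cMi) (pr.c * cMi)"
  have kpos: "\<kappa> > 0" unfolding \<kappa>_def using cMi pr.c_pos by simp
  have Hlow: "\<kappa> * norm (ul k)^2 \<le> H k \<and> \<kappa> * norm (um k)^2 \<le> H k \<and> 0 \<le> H k" for k
  proof -
    have a1: "cMi * norm (ul k)^2 \<le> \<sigma> * norm (ul k)^2"
      using cMi(2)[rule_format, of "ul k"] pr.Mi_E1[of "ul k"] pr.E1_nonneg[of "ul k"] by linarith
    have a2: "cMi * norm (um k)^2 \<le> gnorm2 pr.P (um k)"
      using cMi(2)[rule_format, of "um k"] pr.Mi_E2[of "um k"] pr.E2_nonneg[of "um k"] by linarith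
    have b1: "\<kappa> * norm (ul k)^2 \<le> 1/2 * (\<sigma> * norm (ul k)^2)"
    proof -
      have "\<kappa> * norm (ul k)^2 \<le> (1/2 * cMi) * norm (ul k)^2" unfolding \<kappa>_def by (intro mult_right_mono) auto
      also have "\<dots> \<le> 1/2 * (\<sigma> * norm (ul k)^2)" using a1 by simp
      finally show ?thesis .
    qed
    have b2: "\<kappa> * norm (um k)^2 \<le> pr.c * gnorm2 pr.P (um k)"
    proof -
      have "\<kappa> * norm (um k)^2 \<le> (pr.c * cMi) * norm (um k)^2" unfolding \<kappa>_def by (intro mult_right_mono) auto
      also have "\<dots> \<le> pr.c * gnorm2 pr.P (um k)" using a2 pr.c_pos by (simp add: mult.assoc mult_left_mono)
      finally show ?thesis .
    qed
    have "0 \<le> \<kappa> * norm (ul k)^2" "0 \<le> \<kappa> * norm (um k)^2" using kpos by auto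
    then show ?thesis unfolding H_def using b1 b2 by linarith
  qed
  have Enn: "0 \<le> E k" for k
  proof -
    have "0 \<le> (if k = 0 then 0 else (t k)^2 * (Fk k - Fs))" using Fmin[of k] by simp
    then show ?thesis unfolding E_def using Hlow[of k] by linarith
  qed
  have HE: "H k \<le> E k" for k
  proof -
    have "0 \<le> (if k = 0 then 0 else (t k)^2 * (Fk k - Fs))" using Fmin[of k] by simp
    then show ?thesis unfolding E_def by linarith
  qed
  define \<rho> where "\<rho> = 1 / sqrt \<kappa>"
  have rho_pos: "\<rho> > 0" unfolding \<rho>_def using kpos by simp
  have nbound: "norm (ul k) \<le> \<rho> * sqrt (E k) \<and> norm (um k) \<le> \<rho> * sqrt (E k)" for k
  proof -
    have "norm v \<le> \<rho> * sqrt (E k)" if v: "\<kappa> * norm v ^ 2 \<le> H k" for v :: "real^'n"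
    proof -
      have "norm v ^ 2 \<le> E k / \<kappa>" using v HE[of k] kpos by (simp add: field_simps)
      then have "norm v \<le> sqrt (E k / \<kappa>)" by (intro real_le_rsqrt)
      also have "\<dots> = \<rho> * sqrt (E k)" unfolding \<rho>_def by (simp add: real_sqrt_divide)
      finally show ?thesis .
    qed
    then show ?thesis using Hlow[of k] by blast
  qed
  have link: "t k *\<^sub>R l k - ((t k - 1) *\<^sub>R lt (k - 1) + ls) = ul (k - 1)
      \<and> t k *\<^sub>R m k - ((t k - 1) *\<^sub>R mt (k - 1) + ms) = um (k - 1)" if k: "k \<ge> 1" for k
  proof (cases "k = 1")
    case True
    then show ?thesis using init t1 unfolding ul_def um_def tt_def by simp
  next
    case False
    obtain j where j0: "k = Suc j" using k by (cases k) auto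
    then have j: "k = Suc j" "j \<ge> 1" using False by auto
    have "1 \<le> t (Suc j)" using tf1 by auto
    then have tj: "t (Suc j) > 0" by simp
    have ex: "l (Suc j) = lt j + ((t j - 1) / t (Suc j)) *\<^sub>R (lt j - lt (j - 1))"
      "m (Suc j) = mt j + ((t j - 1) / t (Suc j)) *\<^sub>R (mt j - mt (j - 1))" using extrap j by auto
    have ttj: "tt j = t j" unfolding tt_def using j by simp
    have sc: "t (Suc j) *\<^sub>R (((t j - 1) / t (Suc j)) *\<^sub>R v) = (t j - 1) *\<^sub>R v" for v :: "real^'n"
      using tj by simp
    have e1: "t (Suc j) *\<^sub>R l (Suc j) = t (Suc j) *\<^sub>R lt j + (t j - 1) *\<^sub>R (lt j - lt (j - 1))"
      unfolding ex scaleR_add_right sc ..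
    have e2: "t (Suc j) *\<^sub>R m (Suc j) = t (Suc j) *\<^sub>R mt j + (t j - 1) *\<^sub>R (mt j - mt (j - 1))"
      unfolding ex scaleR_add_right sc ..
    show ?thesis unfolding j(1) ul_def um_def ttj diff_Suc_1 e1 e2
      by (simp add: algebra_simps)
  qed
  have cur: "t k *\<^sub>R lt k - ((t k - 1) *\<^sub>R lt (k - 1) + ls) = ul k
      \<and> t k *\<^sub>R mt k - ((t k - 1) *\<^sub>R mt (k - 1) + ms) = um k" if k: "k \<ge> 1" for k
    using k unfolding ul_def um_def tt_def by simp
  define Y where "Y k = matrix_inv pr.Q *v (- (t k *\<^sub>R dp k - K *v (pr.Mi *v ul (k - 1)) + (2 * pr.c) *\<^sub>R um (k - 1)))" for k
  define err where "err k = - t k * (dp k \<bullet> Y k) + t k * (dl k \<bullet> ul k) + t k * (dm k \<bullet> um k)" for k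
  have recE: "E k \<le> E (k - 1) + err k" if k: "k \<ge> 1" for k
  proof -
    have fo: "pr.Gp (pt k) (l k) (m k) = dp k"
      using step_p k by (intro pr.first_order) (simp add: pr.h_def)
    have C: "(t k)^2 * pr.FF (pt k) (lt k) (mt k) \<le> t k * (t k - 1) * pr.FF (pt (k-1)) (lt (k-1)) (mt (k-1)) + t k * pr.FF ps ls ms
      + 1/2 * (\<sigma> * norm (t k *\<^sub>R l k - ((t k - 1) *\<^sub>R lt (k-1) + ls))^2) - 1/2 * (\<sigma> * norm (t k *\<^sub>R lt k - ((t k - 1) *\<^sub>R lt (k-1) + ls))^2)
      + pr.c * gnorm2 pr.P (t k *\<^sub>R m k - ((t k - 1) *\<^sub>R mt (k-1) + ms)) - pr.c * gnorm2 pr.P (t k *\<^sub>R mt k - ((t k - 1) *\<^sub>R mt (k-1) + ms))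
      - t k * (dp k \<bullet> (matrix_inv pr.Q *v (- (t k *\<^sub>R dp k - K *v (pr.Mi *v (t k *\<^sub>R l k - ((t k - 1) *\<^sub>R lt (k-1) + ls)))
          + (2 * pr.c) *\<^sub>R (t k *\<^sub>R m k - ((t k - 1) *\<^sub>R mt (k-1) + ms))))))
      + t k * (dl k \<bullet> (t k *\<^sub>R lt k - ((t k - 1) *\<^sub>R lt (k-1) + ls))) + t k * (dm k \<bullet> (t k *\<^sub>R mt k - ((t k - 1) *\<^sub>R mt (k-1) + ms)))"
      using k tf1 by (intro pr.comb[OF fo]) (use step_l step_m in auto)
    then have C': "(t k)^2 * Fk k \<le> t k * (t k - 1) * Fk (k-1) + t k * Fs + H (k-1) - H k + err k"
      unfolding link[OF k, THEN conjunct1] link[OF k, THEN conjunct2] cur[OF k, THEN conjunct1] cur[OF k, THEN conjunct2]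
      unfolding Fk_def[symmetric] Fs_def[symmetric] H_def err_def Y_def by simp
    have tsq: "(t k)^2 = t k * (t k - 1) + t k" by (simp add: power2_eq_square algebra_simps)
    have C'': "(t k)^2 * (Fk k - Fs) \<le> t k * (t k - 1) * (Fk (k-1) - Fs) + H (k-1) - H k + err k"
      using C' tsq by (simp add: algebra_simps)
    show ?thesis
    proof (cases "k = 1")
      case True
      then show ?thesis using C'' t1 unfolding E_def by simp
    next
      case False
      then have k2: "k - 1 \<ge> 1" using k by simp
      have "t k * (t k - 1) = (t (k-1))^2"
        using tf2[rule_format, OF k2] k2 by (simp add: power2_eq_square algebra_simps)
      moreover have "E k = (t k)^2 * (Fk k - Fs) + H k" unfolding E_def using k by simp
      moreover have "k - 1 \<noteq> 0" using k2 by simp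
      then have "E (k-1) = (t (k-1))^2 * (Fk (k-1) - Fs) + H (k-1)" unfolding E_def by (simp only: if_False)
      ultimately show ?thesis using C'' by simp
    qed
  qed
  obtain CK where CK: "CK > 0" "\<forall>x. norm (K *v (pr.Mi *v x)) \<le> norm x * CK"
    using bounded_linear.pos_bounded[OF bounded_linear_compose[OF matrix_vector_mul_bounded_linear matrix_vector_mul_bounded_linear, of K pr.Mi]]
    by blast
  obtain cq where cq: "cq > 0" "\<forall>y. cq * norm y \<le> norm (pr.Q *v y)" using pr.Q_bound by blast
  define C1 where "C1 = \<rho> * (CK + 2 * pr.c) / cq + 2 * \<rho>"
  define C2 where "C2 = 1 / cq"
  have errb: "err k \<le> C1 * (real k * \<epsilon> k) * (sqrt (E (k-1)) + sqrt (E k)) + C2 * (real k * \<epsilon> k)^2"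
    if k: "k \<ge> 1" for k
  proof -
    define e where "e = \<epsilon> k"
    define \<tau> where "\<tau> = t k"
    define s0 where "s0 = sqrt (E (k-1))"
    define s1 where "s1 = sqrt (E k)"
    have e0: "0 \<le> e" unfolding e_def using eps_nonneg by simp
    have tau: "1 \<le> \<tau>" "\<tau> \<le> real k" unfolding \<tau>_def using tf1 k by auto
    have s0p: "0 \<le> s0" unfolding s0_def using Enn by simp
    have s1p: "0 \<le> s1" unfolding s1_def using Enn by simp
    have nd: "norm (dp k) \<le> e" "norm (dl k) \<le> e" "norm (dm k) \<le> e" unfolding e_def using err k by auto
    have nu0: "norm (ul (k-1)) \<le> \<rho> * s0" "norm (um (k-1)) \<le> \<rho> * s0" unfolding s0_def using nbound by auto
    have nu1: "norm (ul k) \<le> \<rho> * s1" "norm (um k) \<le> \<rho> * s1" unfolding s1_def using nbound by auto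
    have QY: "pr.Q *v Y k = - (\<tau> *\<^sub>R dp k - K *v (pr.Mi *v ul (k - 1)) + (2 * pr.c) *\<^sub>R um (k - 1))"
      unfolding Y_def pr.Q_solve \<tau>_def ..
    have "norm (pr.Q *v Y k) \<le> norm (\<tau> *\<^sub>R dp k) + norm (K *v (pr.Mi *v ul (k - 1))) + norm ((2 * pr.c) *\<^sub>R um (k - 1))"
      unfolding QY norm_minus_cancel by (rule order_trans[OF norm_triangle_ineq norm_triangle_ineq4[THEN add_right_mono]])
    also have "\<dots> \<le> \<tau> * e + \<rho> * s0 * CK + 2 * pr.c * (\<rho> * s0)"
    proof -
      have "norm (\<tau> *\<^sub>R dp k) \<le> \<tau> * e" using tau nd by (simp add: mult_left_mono)
      moreover have "norm (K *v (pr.Mi *v ul (k - 1))) \<le> \<rho> * s0 * CK"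
        using CK(2)[rule_format, of "ul (k-1)"] nu0(1) CK(1) by (meson mult_right_mono less_imp_le order_trans)
      moreover have "norm ((2 * pr.c) *\<^sub>R um (k - 1)) \<le> 2 * pr.c * (\<rho> * s0)"
        using nu0(2) pr.c_pos by (simp add: mult_left_mono)
      ultimately show ?thesis by linarith
    qed
    finally have nQY: "norm (pr.Q *v Y k) \<le> \<tau> * e + (CK + 2 * pr.c) * \<rho> * s0" by (simp add: algebra_simps)
    have nY: "norm (Y k) \<le> (\<tau> * e + (CK + 2 * pr.c) * \<rho> * s0) / cq"
      using cq(2)[rule_format, of "Y k"] nQY cq(1) by (simp add: field_simps)
    have t1': "- (\<tau> * (dp k \<bullet> Y k)) \<le> \<tau> * e * ((\<tau> * e + (CK + 2 * pr.c) * \<rho> * s0) / cq)"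
    proof -
      have "- (dp k \<bullet> Y k) \<le> norm (dp k) * norm (Y k)"
        using norm_cauchy_schwarz[of "- dp k" "Y k"] by simp
      also have "\<dots> \<le> e * ((\<tau> * e + (CK + 2 * pr.c) * \<rho> * s0) / cq)"
        using nd(1) nY e0 by (intro mult_mono) auto
      finally have "\<tau> * (- (dp k \<bullet> Y k)) \<le> \<tau> * (e * ((\<tau> * e + (CK + 2 * pr.c) * \<rho> * s0) / cq))"
        using tau by (intro mult_left_mono) auto
      then show ?thesis by (simp only: mult_minus_right mult.assoc)
    qed
    have t2': "\<tau> * (dl k \<bullet> ul k) \<le> \<tau> * e * (\<rho> * s1)"
    proof -
      have "dl k \<bullet> ul k \<le> norm (dl k) * norm (ul k)" by (rule norm_cauchy_schwarz)
      also have "\<dots> \<le> e * (\<rho> * s1)" using nd(2) nu1(1) e0 by (intro mult_mono) auto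
      finally show ?thesis using tau by (simp add: mult_left_mono mult.assoc)
    qed
    have t3': "\<tau> * (dm k \<bullet> um k) \<le> \<tau> * e * (\<rho> * s1)"
    proof -
      have "dm k \<bullet> um k \<le> norm (dm k) * norm (um k)" by (rule norm_cauchy_schwarz)
      also have "\<dots> \<le> e * (\<rho> * s1)" using nd(3) nu1(2) e0 by (intro mult_mono) auto
      finally show ?thesis using tau by (simp add: mult_left_mono mult.assoc)
    qed
    define z where "z = \<tau> * e"
    define Z where "Z = real k * e"
    have z0: "0 \<le> z" "z \<le> Z" unfolding z_def Z_def using tau e0 by (auto intro: mult_right_mono)
    have "err k \<le> z * ((z + (CK + 2 * pr.c) * \<rho> * s0) / cq) + z * (\<rho> * s1) + z * (\<rho> * s1)"
      using t1' t2' t3' unfolding err_def z_def \<tau>_def by linarith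
    also have "\<dots> = C2 * z^2 + (\<rho> * (CK + 2 * pr.c) / cq) * z * s0 + 2 * \<rho> * z * s1"
      unfolding C2_def using cq(1) by (simp add: field_simps power2_eq_square)
    also have "\<dots> \<le> C2 * Z^2 + C1 * Z * s0 + C1 * Z * s1"
    proof -
      have C2p: "0 \<le> C2" unfolding C2_def using cq by simp
      have A0: "0 \<le> \<rho> * (CK + 2 * pr.c) / cq" using rho_pos CK pr.c_pos cq by simp
      have "C2 * z^2 \<le> C2 * Z^2" using z0 C2p by (intro mult_left_mono power_mono) auto
      moreover have "(\<rho> * (CK + 2 * pr.c) / cq) * z * s0 \<le> C1 * Z * s0"
        unfolding C1_def using z0 A0 s0p rho_pos by (intro mult_right_mono mult_mono) auto
      moreover have "2 * \<rho> * z * s1 \<le> C1 * Z * s1"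
        unfolding C1_def using z0 A0 s1p rho_pos by (intro mult_right_mono mult_mono) auto
      ultimately show ?thesis by linarith
    qed
    finally show ?thesis unfolding Z_def s0_def s1_def e_def by (simp add: algebra_simps)
  qed
  define cc where "cc k = C1 * (real k * \<epsilon> k)" for k
  define dd where "dd k = C2 * (real k * \<epsilon> k)^2" for k
  have C1p: "0 \<le> C1" unfolding C1_def using rho_pos CK pr.c_pos cq by simp
  have C2p: "0 \<le> C2" unfolding C2_def using cq by simp
  have ke0: "0 \<le> real k * \<epsilon> k" for k using eps_nonneg by simp
  have sum_cc: "summable cc" unfolding cc_def by (rule summable_mult[OF eps_sum])
  define S where "S = suminf (\<lambda>k. real k * \<epsilon> k)"
  have keS: "real k * \<epsilon> k \<le> S" for k
  proof -
    have "sum (\<lambda>k. real k * \<epsilon> k) {k} \<le> S" unfolding S_def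
      using eps_sum ke0 by (intro sum_le_suminf) auto
    then show ?thesis by simp
  qed
  have sum_dd: "summable dd"
  proof (rule summable_comparison_test'[OF summable_mult[OF eps_sum, of "C2 * S"]])
    fix n :: nat
    have "(real n * \<epsilon> n)^2 \<le> S * (real n * \<epsilon> n)"
      unfolding power2_eq_square using keS[of n] ke0[of n] by (intro mult_right_mono) auto
    then have "C2 * (real n * \<epsilon> n)^2 \<le> C2 * (S * (real n * \<epsilon> n))" using C2p by (intro mult_left_mono) auto
    then show "norm (dd n) \<le> C2 * S * (real n * \<epsilon> n)" unfolding dd_def using C2p by (simp add: mult.assoc)
  qed
  have rec: "\<forall>k\<ge>1. E k \<le> E (k-1) + cc k * (sqrt (E (k-1)) + sqrt (E k)) + dd k"
    using recE errb unfolding cc_def dd_def by (smt (verit))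
  obtain B where B: "\<forall>k. E k \<le> B"
    using rec_bounded[of E cc dd] Enn C1p C2p ke0 sum_cc sum_dd rec unfolding cc_def dd_def by force
  have B0: "0 \<le> B" using B Enn[of 0] by (meson order_trans)
  have fin: "Fk k - Fs \<le> 4 * B / (real k + 1)^2" if k: "k \<ge> 1" for k
  proof -
    have "(t k)^2 * (Fk k - Fs) \<le> E k" unfolding E_def using k Hlow[of k] by simp
    then have tb: "(t k)^2 * (Fk k - Fs) \<le> B" using B by (meson order_trans)
    have "((real k + 1) / 2)^2 \<le> (t k)^2" using tf1 k by (intro power_mono) auto
    then have "((real k + 1) / 2)^2 * (Fk k - Fs) \<le> (t k)^2 * (Fk k - Fs)"
      using Fmin[of k] by (intro mult_right_mono) auto
    then have "((real k + 1) / 2)^2 * (Fk k - Fs) \<le> B" using tb by linarith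
    moreover have qpos: "0 < ((real k + 1) / 2)^2" by simp
    ultimately have "Fk k - Fs \<le> B / ((real k + 1) / 2)^2" by (simp add: pos_le_divide_eq mult.commute)
    also have "B / ((real k + 1) / 2)^2 = 4 * B / (real k + 1)^2" by (simp add: power_divide)
    finally show ?thesis .
  qed
  define X where "X = gnorm2 (0::real^'n^'n) (pt 0 - ps)
              + gnorm2 ((\<sigma> *\<^sub>R mat 1 - matrix_inv M) + matrix_inv M) (lt 0 - ls)
              + gnorm2 ((1/\<alpha>) *\<^sub>R (cn *\<^sub>R matrix_inv W - matrix_inv M) + (1/\<alpha>) *\<^sub>R matrix_inv M) (mt 0 - ms)"
  show ?thesis
  proof (intro exI[of _ "4 * B - 2 * X"] allI impI)
    fix k :: nat assume k: "1 \<le> k"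
    have "F_fun K M D yd f \<alpha> delta a b (pt k) (lt k) (mt k) - F_fun K M D yd f \<alpha> delta a b ps ls ms = Fk k - Fs"
      unfolding Fk_def Fs_def pr.FF_def ..
    also have "\<dots> \<le> 4 * B / (real k + 1)^2" using fin[OF k] .
    also have "\<dots> = (2 * X + (4 * B - 2 * X)) / (real k + 1)^2" by simp
    finally show "F_fun K M D yd f \<alpha> delta a b (pt k) (lt k) (mt k) - F_fun K M D yd f \<alpha> delta a b ps ls ms
     \<le> (2 * (gnorm2 (0::real^'n^'n) (pt 0 - ps)
              + gnorm2 ((\<sigma> *\<^sub>R mat 1 - matrix_inv M) + matrix_inv M) (lt 0 - ls)
              + gnorm2 ((1/\<alpha>) *\<^sub>R (cn *\<^sub>R matrix_inv W - matrix_inv M) + (1/\<alpha>) *\<^sub>R matrix_inv M) (mt 0 - ms))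
         + (4 * B - 2 * X)) / (real k + 1)\<^sup>2" unfolding X_def .
  qed
qed

end
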